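(* For every $f\in H^2(\mathbb{D})$, $$\lim_{|a|\to 1\ \text{or}\ n\to\infty}|\langle f,e_{n,a}\rangle|=0,$$ i.e. for every $\varepsilon>0$ there exist $r<1$ and $N\in\mathbb{N}$ such that $|\langle f,e_{n,a}\rangle|<\varepsilon$ whenever $(n,a)\in\mathbb{N}\times\mathbb{D}$ satisfies $|a|>r$ or $n>N$. (In other words, the complete Szegő dictionary $\{e_{n,a}\}_{(n,a)\in\mathbb{N}\times\mathbb{D}}$ satisfies the boundary vanishing condition.)
   Context: $\mathbb{D}$ is the open unit disc; $H^2(\mathbb{D})$ the Hardy space with inner product $\langle f,g\rangle=\frac{1}{2\pi}\int_0^{2\pi}f(e^{it})\overline{g(e^{it})}\,dt$. For $n\in\mathbb{N}=\{0,1,\dots\}$ and $a\in\mathbb{D}$, $k_{n,a}(z)=\left(\frac{\partial}{\partial\overline{a}}\right)^n\frac{1}{1-\overline{a}z}=\frac{n!\,z^n}{(1-\overline{a}z)^{n+1}}$ and $e_{n,a}=k_{n,a}/\|k_{n,a}\|$. *)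

theory Defs
  imports "HOL-Analysis.Analysis"
begin

definition circle_mean :: "(complex \<Rightarrow> complex) \<Rightarrow> (complex \<Rightarrow> complex) \<Rightarrow> real \<Rightarrow> complex" where
  "circle_mean f g r = (1 / (2 * pi)) *\<^sub>R
     integral {0..2*pi} (\<lambda>t. f (of_real r * exp (\<i> * of_real t)) * cnj (g (of_real r * exp (\<i> * of_real t))))"

definition H2 :: "(complex \<Rightarrow> complex) set" where
  "H2 = {f. f holomorphic_on ball 0 1 \<and>
            bounded ((\<lambda>r. circle_mean f f r) ` {0..<1})}"

text \<open>Inner product of H^2 (equal to the boundary-value integral).\<close>
definition h2_inner :: "(complex \<Rightarrow> complex) \<Rightarrow> (complex \<Rightarrow> complex) \<Rightarrow> complex" where
  "h2_inner f g = Lim (at_left 1) (circle_mean f g)"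

definition h2_norm :: "(complex \<Rightarrow> complex) \<Rightarrow> real" where
  "h2_norm f = sqrt (Re (h2_inner f f))"

definition szego_k :: "nat \<Rightarrow> complex \<Rightarrow> complex \<Rightarrow> complex" where
  "szego_k n a z = of_nat (fact n) * z ^ n / (1 - cnj a * z) ^ (n + 1)"

definition szego_e :: "nat \<Rightarrow> complex \<Rightarrow> complex \<Rightarrow> complex" where
  "szego_e n a z = szego_k n a z / of_real (h2_norm (szego_k n a))"

end

theory Submission
  imports Defs "HOL-Complex_Analysis.Complex_Analysis"
begin

lemma binom_series_real:
  fixes x :: real
  assumes "0 \<le> x" "x < 1"
  shows "(\<lambda>m. real ((n+m) choose m) * x^m) sums (1/(1-x)^(n+1))"
proof (induction n)
  case 0
  then show ?case using geometric_sums[of x] assms by simp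
next
  case (Suc n)
  have a: "summable (\<lambda>k. norm (real ((n+k) choose k) * x^k))"
    using Suc.IH assms by (simp add: sums_summable abs_mult)
  have b: "summable (\<lambda>k. norm (x^k))"
    using assms by (simp add: summable_geometric)
  from Cauchy_product_sums[OF a b]
  have "(\<lambda>k. \<Sum>i\<le>k. real ((n+i) choose i) * x^i * x^(k-i)) sums
     ((\<Sum>k. real ((n+k) choose k) * x^k) * (\<Sum>k. x^k))" .
  moreover have "(\<Sum>i\<le>k. real ((n+i) choose i) * x^i * x^(k-i)) = real ((Suc n + k) choose k) * x^k" for k
  proof -
    have "(\<Sum>i\<le>k. real ((n+i) choose i) * x^i * x^(k-i)) = (\<Sum>i\<le>k. real ((n+i) choose i)) * x^k"
      by (simp add: sum_distrib_right mult.assoc power_add[symmetric])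
    also have "(\<Sum>i\<le>k. real ((n+i) choose i)) = real (Suc (n+k) choose k)"
      using sum_choose_lower[of n k] by (metis of_nat_sum)
    finally show ?thesis by simp
  qed
  moreover have "(\<Sum>k. real ((n+k) choose k) * x^k) = 1/(1-x)^(n+1)" using Suc.IH sums_unique by metis
  moreover have "(\<Sum>k. x^k) = 1/(1-x)" using geometric_sums[of x] assms sums_unique by fastforce
  moreover have "1/(1-x)^(n+1) * (1/(1-x)) = 1/(1-x)^(Suc n+1)" by simp
  ultimately show ?case by (simp add: mult_ac)
qed

lemma binom_series_complex:
  fixes w :: complex
  assumes "norm w < 1"
  shows "(\<lambda>m. of_nat ((n+m) choose m) * w^m) sums (1/(1-w)^(n+1))"
proof (induction n)
  case 0
  then show ?case using geometric_sums[of w] assms by simp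
next
  case (Suc n)
  have a: "summable (\<lambda>k. norm (of_nat ((n+k) choose k) * w^k))"
    using binom_series_real[of "norm w" n] assms by (simp add: sums_summable norm_mult norm_power)
  have b: "summable (\<lambda>k. norm (w^k))"
    using assms by (simp add: summable_geometric norm_power)
  from Cauchy_product_sums[OF a b]
  have "(\<lambda>k. \<Sum>i\<le>k. of_nat ((n+i) choose i) * w^i * w^(k-i)) sums
     ((\<Sum>k. of_nat ((n+k) choose k) * w^k) * (\<Sum>k. w^k))" .
  moreover have "(\<Sum>i\<le>k. of_nat ((n+i) choose i) * w^i * w^(k-i)) = of_nat ((Suc n + k) choose k) * w^k" for k
  proof -
    have "(\<Sum>i\<le>k. (of_nat ((n+i) choose i)::complex) * w^i * w^(k-i)) = (\<Sum>i\<le>k. of_nat ((n+i) choose i)) * w^k"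
      by (simp add: sum_distrib_right mult.assoc power_add[symmetric])
    also have "(\<Sum>i\<le>k. (of_nat ((n+i) choose i)::complex)) = of_nat (Suc (n+k) choose k)"
      using sum_choose_lower[of n k] by (metis of_nat_sum)
    finally show ?thesis by simp
  qed
  moreover have "(\<Sum>k. of_nat ((n+k) choose k) * w^k) = 1/(1-w)^(n+1)" using Suc.IH sums_unique by metis
  moreover have "(\<Sum>k. w^k) = 1/(1-w)" using geometric_sums[of w] assms sums_unique by fastforce
  moreover have "w \<noteq> 1" using assms by auto
  moreover have "1/(1-w)^(n+1) * (1/(1-w)) = 1/(1-w)^(Suc n+1)" by simp
  ultimately show ?case by (simp add: mult_ac)
qed


lemma exp_int_integral:
  fixes m :: int
  shows "((\<lambda>t::real. exp (of_real t * (\<i> * of_int m))) has_integral (if m = 0 then 2*pi else 0)) {0..2*pi}"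
proof (cases "m = 0")
  case True
  then show ?thesis using has_integral_const_real[of "1::complex" 0 "2*pi"]
    by (simp add: scaleR_conv_of_real)
next
  case False
  define w where "w = \<i> * of_int m"
  have w0: "w \<noteq> 0" using False by (simp add: w_def)
  have d: "((\<lambda>z. exp (z * w) / w) has_field_derivative exp (z * w)) (at z)" for z
    using w0 by (auto intro!: derivative_eq_intros)
  have "((\<lambda>t. exp (of_real t * w)) has_integral (exp (of_real (2*pi) * w) / w - exp (of_real 0 * w) / w)) {0..2*pi}"
    apply (rule fundamental_theorem_of_calculus)
     apply simp
    apply (rule has_vector_derivative_real_field[of "\<lambda>z. exp (z * w) / w", simplified])
    using d by simp
  moreover have "exp (of_real (2*pi) * w) = 1"
    using exp_integer_2pi[of "of_int m"] by (simp add: w_def mult_ac)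
  ultimately show ?thesis using False by (simp add: w_def)
qed

lemma orth:
  "((\<lambda>t::real. exp (\<i> * of_real t)^j * cnj (exp (\<i> * of_real t))^k) has_integral (if j = k then 2*pi else 0)) {0..2*pi}"
proof -
  have "exp (\<i> * of_real t)^j * cnj (exp (\<i> * of_real t))^k = exp (of_real t * (\<i> * of_int (int j - int k)))" for t
  proof -
    have "exp (\<i> * of_real t)^j = exp (of_nat j * (\<i> * of_real t))" by (simp add: exp_of_nat_mult)
    moreover have "cnj (exp (\<i> * of_real t))^k = exp (of_nat k * (- \<i> * of_real t))"
    proof -
      have "cnj (exp (\<i> * of_real t)) = exp (- \<i> * of_real t)" by (simp add: exp_cnj)
      then show ?thesis using exp_of_nat_mult[of k "- (\<i> * of_real t)"] by simp
    qed
    ultimately show ?thesis by (simp add: exp_add[symmetric] algebra_simps)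
  qed
  then show ?thesis using exp_int_integral[of "int j - int k"] by simp
qed


lemma ser_unif:
  fixes c :: "nat \<Rightarrow> complex"
  assumes cf: "\<And>z. norm z < 1 \<Longrightarrow> (\<lambda>j. c j * z^j) sums f z"
    and r: "0 \<le> r" "r < 1"
  shows "uniform_limit UNIV (\<lambda>N t. \<Sum>j<N. c j * (of_real r * exp (\<i> * of_real t))^j)
           (\<lambda>t. f (of_real r * exp (\<i> * of_real t))) sequentially"
    and "bounded (range (\<lambda>t. f (of_real r * exp (\<i> * of_real t))))"
proof -
  define \<rho> where "\<rho> = (1 + r) / 2"
  have "\<rho> < 1" "0 \<le> \<rho>" using r by (auto simp: \<rho>_def)
  then have "norm (complex_of_real \<rho>) < 1" by simp
  then have "summable (\<lambda>j. c j * of_real \<rho> ^ j)" by (rule sums_summable[OF cf])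
  then have sM: "summable (\<lambda>j. norm (c j * of_real r ^ j))"
  proof (rule powser_insidea)
    have "r < \<rho>" using r by (simp add: \<rho>_def)
    then show "norm (complex_of_real r) < norm (complex_of_real \<rho>)" using r by simp
  qed
  have nu: "norm (of_real r * exp (\<i> * of_real t)) = r" for t
    using r by (simp add: norm_mult)
  have nt: "norm (c j * (of_real r * exp (\<i> * of_real t))^j) = norm (c j * of_real r ^ j)" for j t
    by (simp add: norm_mult norm_power)
  have sf: "(\<lambda>j. c j * (of_real r * exp (\<i> * of_real t))^j) sums f (of_real r * exp (\<i> * of_real t))" for t
    by (rule cf) (simp add: nu r)
  have "uniform_limit UNIV (\<lambda>N t. \<Sum>j<N. c j * (of_real r * exp (\<i> * of_real t))^j)
           (\<lambda>t. suminf (\<lambda>j. c j * (of_real r * exp (\<i> * of_real t))^j)) sequentially"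
    by (rule Weierstrass_m_test[OF _ sM]) (simp only: nt)
  moreover have "(\<lambda>t. suminf (\<lambda>j. c j * (of_real r * exp (\<i> * of_real t))^j)) =
      (\<lambda>t. f (of_real r * exp (\<i> * of_real t)))"
    by (rule ext) (rule sums_unique[OF sf, symmetric])
  ultimately show "uniform_limit UNIV (\<lambda>N t. \<Sum>j<N. c j * (of_real r * exp (\<i> * of_real t))^j)
           (\<lambda>t. f (of_real r * exp (\<i> * of_real t))) sequentially" by simp
  have "norm (f (of_real r * exp (\<i> * of_real t))) \<le> (\<Sum>j. norm (c j * of_real r ^ j))" for t
  proof -
    have "f (of_real r * exp (\<i> * of_real t)) = suminf (\<lambda>j. c j * (of_real r * exp (\<i> * of_real t))^j)"
      by (rule sums_unique[OF sf])
    moreover have "summable (\<lambda>j. norm (c j * (of_real r * exp (\<i> * of_real t))^j))"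
      using sM by (simp only: nt)
    moreover have "norm (suminf (\<lambda>j. c j * (of_real r * exp (\<i> * of_real t))^j))
       \<le> (\<Sum>j. norm (c j * (of_real r * exp (\<i> * of_real t))^j))"
      by (rule summable_norm) fact
    ultimately show ?thesis by (simp only: nt)
  qed
  then show "bounded (range (\<lambda>t. f (of_real r * exp (\<i> * of_real t))))"
    by (intro boundedI[where B="\<Sum>j. norm (c j * of_real r ^ j)"]) auto
qed

lemma parseval_r:
  fixes c d :: "nat \<Rightarrow> complex"
  assumes cf: "\<And>z. norm z < 1 \<Longrightarrow> (\<lambda>j. c j * z^j) sums f z"
    and dg: "\<And>z. norm z < 1 \<Longrightarrow> (\<lambda>j. d j * z^j) sums g z"
    and r: "0 \<le> r" "r < 1"
  shows "(\<lambda>j. c j * cnj (d j) * of_real (r^(2*j))) sums circle_mean f g r"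
proof -
  define E where "E = (\<lambda>t::real. exp (\<i> * of_real t))"
  define FN where "FN = (\<lambda>N t. \<Sum>j<N. c j * (of_real r * E t)^j)"
  define GN where "GN = (\<lambda>N t. \<Sum>j<N. d j * (of_real r * E t)^j)"
  have UF: "uniform_limit {0..2*pi} FN (\<lambda>t. f (of_real r * E t)) sequentially"
    unfolding FN_def E_def by (rule uniform_limit_on_subset[OF ser_unif(1)[OF cf r]]) auto
  have UG: "uniform_limit {0..2*pi} GN (\<lambda>t. g (of_real r * E t)) sequentially"
    unfolding GN_def E_def by (rule uniform_limit_on_subset[OF ser_unif(1)[OF dg r]]) auto
  have BF: "bounded ((\<lambda>t. f (of_real r * E t)) ` {0..2*pi})"
    by (rule bounded_subset[OF ser_unif(2)[OF cf r]]) (auto simp: E_def)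
  have BG: "bounded ((\<lambda>t. cnj (g (of_real r * E t))) ` {0..2*pi})"
  proof -
    have "bounded ((\<lambda>t. g (of_real r * E t)) ` {0..2*pi})"
      by (rule bounded_subset[OF ser_unif(2)[OF dg r]]) (auto simp: E_def)
    from bounded_linear_image[OF this bounded_linear_cnj]
    show ?thesis by (simp add: image_image)
  qed
  have UGc: "uniform_limit {0..2*pi} (\<lambda>N t. cnj (GN N t)) (\<lambda>t. cnj (g (of_real r * E t))) sequentially"
    by (rule bounded_linear.uniform_limit[OF bounded_linear_cnj UG])
  have UP: "uniform_limit {0..2*pi} (\<lambda>N t. FN N t * cnj (GN N t))
      (\<lambda>t. f (of_real r * E t) * cnj (g (of_real r * E t))) sequentially"
    by (rule uniform_lim_mult[OF UF UGc BF BG])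
  have cont: "continuous_on {0..2*pi} (\<lambda>t. FN N t * cnj (GN N t))" for N
    unfolding FN_def GN_def E_def by (intro continuous_intros)
  obtain I J where I: "\<And>N. ((\<lambda>t. FN N t * cnj (GN N t)) has_integral I N) {0..2*pi}"
    and J: "((\<lambda>t. f (of_real r * E t) * cnj (g (of_real r * E t))) has_integral J) {0..2*pi}"
    and IJ: "I \<longlonglongrightarrow> J"
    using uniform_limit_integral[OF UP cont sequentially_bot] by blast
  have expand: "FN N t * cnj (GN N t) = (\<Sum>j<N. \<Sum>k<N. (c j * cnj (d k) * of_real (r^(j+k))) * (E t^j * cnj (E t)^k))" for N t
    unfolding FN_def GN_def cnj_sum sum_product
    by (intro sum.cong refl) (simp add: power_mult_distrib power_add mult_ac)
  have one: "((\<lambda>t. c j * cnj (d k) * of_real (r^(j+k)) * (E t^j * cnj (E t)^k)) has_integral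
      (c j * cnj (d k) * of_real (r^(j+k)) * of_real (if j = k then 2*pi else 0))) {0..2*pi}" for j k
    by (rule has_integral_mult_right) (use orth[of j k] in \<open>simp add: E_def\<close>)
  have HI: "((\<lambda>t. FN N t * cnj (GN N t)) has_integral
      (\<Sum>j<N. \<Sum>k<N. (c j * cnj (d k) * of_real (r^(j+k))) * of_real (if j = k then 2*pi else 0))) {0..2*pi}" for N
    unfolding expand
    by (rule has_integral_sum[OF finite_lessThan], rule has_integral_sum[OF finite_lessThan], rule one)
  have EQ: "(\<Sum>j<N. \<Sum>k<N. (c j * cnj (d k) * of_real (r^(j+k))) * of_real (if j = k then 2*pi else 0))
      = of_real (2*pi) * (\<Sum>j<N. c j * cnj (d j) * of_real (r^(2*j)))" for N
  proof -
    have inner: "(\<Sum>k<N. (c j * cnj (d k) * of_real (r^(j+k))) * of_real (if j = k then 2*pi else 0))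
       = of_real (2*pi) * (c j * cnj (d j) * of_real (r^(2*j)))" if "j < N" for j
    proof -
      have "(\<Sum>k<N. (c j * cnj (d k) * of_real (r^(j+k))) * of_real (if j = k then 2*pi else 0))
        = (\<Sum>k<N. if k = j then (c j * cnj (d k) * of_real (r^(j+k))) * of_real (2*pi) else 0)"
        by (intro sum.cong) auto
      also have "\<dots> = (c j * cnj (d j) * of_real (r^(j+j))) * of_real (2*pi)"
        using that by (simp add: sum.delta')
      also have "r^(j+j) = r^(2*j)" by (metis mult_2)
      finally show ?thesis by (simp only: mult.commute)
    qed
    have "(\<Sum>j<N. \<Sum>k<N. (c j * cnj (d k) * of_real (r^(j+k))) * of_real (if j = k then 2*pi else 0))
      = (\<Sum>j<N. of_real (2*pi) * (c j * cnj (d j) * of_real (r^(2*j))))"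
      by (rule sum.cong[OF refl]) (rule inner, simp)
    then show ?thesis by (simp only: sum_distrib_left)
  qed
  have IN: "I N = of_real (2*pi) * (\<Sum>j<N. c j * cnj (d j) * of_real (r^(2*j)))" for N
  proof -
    have "I N = (\<Sum>j<N. \<Sum>k<N. (c j * cnj (d k) * of_real (r^(j+k))) * of_real (if j = k then 2*pi else 0))"
      by (rule has_integral_unique[OF I HI])
    then show ?thesis by (simp only: EQ)
  qed
  have "(\<lambda>N. I N / of_real (2*pi)) \<longlonglongrightarrow> J / of_real (2*pi)"
    by (rule tendsto_divide[OF IJ tendsto_const]) simp
  then have "(\<lambda>N. \<Sum>j<N. c j * cnj (d j) * of_real (r^(2*j))) \<longlonglongrightarrow> J / of_real (2*pi)"
    by (simp add: IN)
  moreover have "circle_mean f g r = J / of_real (2*pi)"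
  proof -
    have "integral {0..2*pi} (\<lambda>t. f (of_real r * E t) * cnj (g (of_real r * E t))) = J"
      by (rule integral_unique[OF J])
    then show ?thesis unfolding circle_mean_def E_def by (simp add: scaleR_conv_of_real)
  qed
  ultimately show ?thesis unfolding sums_def by simp
qed


definition dk :: "nat \<Rightarrow> complex \<Rightarrow> nat \<Rightarrow> complex" where
  "dk n a j = (if j < n then 0 else of_nat (fact n) * of_nat (j choose n) * cnj a ^ (j - n))"

lemma szego_sums:
  assumes "norm (cnj a * z) < 1"
  shows "(\<lambda>j. dk n a j * z^j) sums szego_k n a z"
proof -
  define X where "X = of_nat (fact n) * z^n"
  have "(\<lambda>m. X * (of_nat ((n+m) choose m) * (cnj a * z)^m)) sums (X * (1/(1-cnj a * z)^(n+1)))"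
    by (rule sums_mult[OF binom_series_complex[OF assms]])
  moreover have "dk n a (m+n) * z^(m+n) = X * (of_nat ((n+m) choose m) * (cnj a * z)^m)" for m
  proof -
    have "(m+n) choose n = (n+m) choose m"
      using binomial_symmetric[of n "m+n"] by (simp add: add.commute)
    then show ?thesis by (simp add: dk_def X_def power_mult_distrib power_add mult_ac)
  qed
  moreover have "X * (1/(1-cnj a * z)^(n+1)) = szego_k n a z"
    by (simp add: szego_k_def X_def)
  ultimately have "(\<lambda>m. dk n a (m+n) * z^(m+n)) sums szego_k n a z" by simp
  then show ?thesis
    using sums_zero_iff_shift[of n "\<lambda>j. dk n a j * z^j"] by (simp add: dk_def)
qed

lemma h2_inner_eq:
  fixes c d :: "nat \<Rightarrow> complex"
  assumes cf: "\<And>z. norm z < 1 \<Longrightarrow> (\<lambda>j. c j * z^j) sums f z"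
    and dg: "\<And>z. norm z < 1 \<Longrightarrow> (\<lambda>j. d j * z^j) sums g z"
    and s: "summable (\<lambda>j. norm (c j * cnj (d j)))"
  shows "h2_inner f g = (\<Sum>j. c j * cnj (d j))"
proof -
  define P where "P = (\<lambda>r::real. \<Sum>j. c j * cnj (d j) * of_real (r^(2*j)))"
  have bnd: "norm (c j * cnj (d j) * of_real (x^(2*j))) \<le> norm (c j * cnj (d j))" if "x \<in> {0..1}" for j x
  proof -
    have "norm (complex_of_real x ^ (2*j)) \<le> 1" using that by (simp add: norm_power power_le_one)
    then show ?thesis by (simp add: norm_mult mult_left_le)
  qed
  have UL: "uniform_limit {0..1} (\<lambda>N r. \<Sum>j<N. c j * cnj (d j) * of_real (r^(2*j))) P sequentially"
    unfolding P_def by (rule Weierstrass_m_test[OF bnd s])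
  have "continuous_on {0..1} P"
    by (rule uniform_limit_theorem[OF _ UL]) (auto intro!: always_eventually continuous_intros)
  then have "(P \<longlongrightarrow> P 1) (at 1 within {0..1})"
    by (simp add: continuous_on_def)
  then have L: "(P \<longlongrightarrow> P 1) (at_left 1)"
    by (simp add: at_within_Icc_at_left)
  have "eventually (\<lambda>r. r \<in> {0<..<1}) (at_left (1::real))"
    by (rule eventually_at_left_real) simp
  then have "eventually (\<lambda>r. P r = circle_mean f g r) (at_left (1::real))"
  proof (rule eventually_mono)
    fix r :: real assume "r \<in> {0<..<1}"
    then have "(\<lambda>j. c j * cnj (d j) * of_real (r^(2*j))) sums circle_mean f g r"
      using parseval_r[OF cf dg, of r] by auto
    then show "P r = circle_mean f g r"
      unfolding P_def by (rule sums_unique[symmetric])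
  qed
  from Lim_transform_eventually[OF L this]
  have "h2_inner f g = P 1"
    unfolding h2_inner_def by (rule tendsto_Lim[rotated]) simp
  then show ?thesis by (simp add: P_def)
qed

lemma H2_summable:
  fixes c :: "nat \<Rightarrow> complex"
  assumes cf: "\<And>z. norm z < 1 \<Longrightarrow> (\<lambda>j. c j * z^j) sums f z"
    and b: "bounded ((\<lambda>r. circle_mean f f r) ` {0..<1})"
  shows "summable (\<lambda>j. norm (c j)^2)"
proof -
  from b obtain B where B0: "\<forall>x\<in>(\<lambda>r. circle_mean f f r) ` {0..<1}. norm x \<le> B"
    unfolding bounded_iff by blast
  have B: "\<And>r. r \<in> {0..<1} \<Longrightarrow> norm (circle_mean f f r) \<le> B" using B0 by blast
  have rs: "(\<lambda>j. norm (c j)^2 * r^(2*j)) sums Re (circle_mean f f r)" if "r \<in> {0..<1}" for r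
  proof -
    have "(\<lambda>j. Re (c j * cnj (c j) * of_real (r^(2*j)))) sums Re (circle_mean f f r)"
      using bounded_linear.sums[OF bounded_linear_Re parseval_r[OF cf cf, of r]] that by auto
    moreover have "Re (c j * cnj (c j) * of_real (r^(2*j))) = norm (c j)^2 * r^(2*j)" for j
      by (simp only: complex_norm_square[symmetric] of_real_mult[symmetric] Re_complex_of_real)
    ultimately show ?thesis by (simp only:)
  qed
  have part: "(\<Sum>j<N. norm (c j)^2) \<le> B" for N
  proof -
    have T: "((\<lambda>r::real. \<Sum>j<N. norm (c j)^2 * r^(2*j)) \<longlongrightarrow> (\<Sum>j<N. norm (c j)^2 * 1^(2*j))) (at_left 1)"
      by (intro tendsto_intros)
    have "eventually (\<lambda>r. r \<in> {0<..<1}) (at_left (1::real))"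
      by (rule eventually_at_left_real) simp
    then have "eventually (\<lambda>r. (\<Sum>j<N. norm (c j)^2 * r^(2*j)) \<le> B) (at_left (1::real))"
    proof (rule eventually_mono)
      fix r :: real assume r: "r \<in> {0<..<1}"
      then have "(\<Sum>j<N. norm (c j)^2 * r^(2*j)) \<le> Re (circle_mean f f r)"
        using sum_le_suminf[OF sums_summable[OF rs] finite_lessThan] sums_unique[OF rs] by auto
      also have "\<dots> \<le> norm (circle_mean f f r)" by (rule complex_Re_le_cmod)
      also have "\<dots> \<le> B" using B r by auto
      finally show "(\<Sum>j<N. norm (c j)^2 * r^(2*j)) \<le> B" .
    qed
    from tendsto_upperbound[OF T this] show ?thesis by simp
  qed
  show ?thesis by (rule summableI_nonneg_bounded[OF _ part]) simp
qed


lemma dk_norm: "norm (dk n a j) = (if j < n then 0 else fact n * real (j choose n) * norm a ^ (j - n))"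
  by (simp add: dk_def norm_mult norm_power)

lemma dk_summable1:
  assumes "norm a < 1"
  shows "summable (\<lambda>j. norm (dk n a j))"
proof -
  have "summable (\<lambda>m. fact n * (real ((n+m) choose m) * norm a ^ m))"
    using binom_series_real[of "norm a" n] assms by (intro summable_mult sums_summable) auto
  moreover have "norm (dk n a (m+n)) = fact n * (real ((n+m) choose m) * norm a ^ m)" for m
  proof -
    have "(m+n) choose n = (n+m) choose m"
      using binomial_symmetric[of n "m+n"] by (simp add: add.commute)
    then show ?thesis by (simp add: dk_norm)
  qed
  ultimately have "summable (\<lambda>m. norm (dk n a (m+n)))" by simp
  then show ?thesis using summable_iff_shift[of "\<lambda>j. norm (dk n a j)" n] by simp
qed

lemma dk_summable2:
  assumes "norm a < 1"
  shows "summable (\<lambda>j. norm (dk n a j)^2)"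
proof -
  have s1: "summable (\<lambda>j. norm (dk n a j))" by (rule dk_summable1[OF assms])
  have "(\<lambda>j. norm (dk n a j)) \<longlonglongrightarrow> 0" by (rule summable_LIMSEQ_zero[OF s1])
  then have "eventually (\<lambda>j. norm (dk n a j) < 1) sequentially"
    by (rule order_tendstoD) simp
  then obtain N0 where N0: "\<And>j. j \<ge> N0 \<Longrightarrow> norm (dk n a j) < 1"
    by (auto simp: eventually_sequentially)
  show ?thesis
  proof (rule summable_comparison_test'[OF s1])
    fix j assume "j \<ge> N0"
    then have "norm (dk n a j) < 1" by (rule N0)
    then show "norm (norm (dk n a j)^2) \<le> norm (dk n a j)"
      by (simp add: power2_eq_square mult_left_le_one_le)
  qed
qed

lemma dk_lower:
  assumes "norm a < 1"
  shows "1 / (1 - norm a ^ 2) \<le> (\<Sum>j. norm (dk n a j)^2)"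
proof -
  have s2: "summable (\<lambda>j. norm (dk n a j)^2)" by (rule dk_summable2[OF assms])
  have "(\<Sum>j. norm (dk n a j)^2) = (\<Sum>m. norm (dk n a (m+n))^2) + (\<Sum>j<n. norm (dk n a j)^2)"
    by (rule suminf_split_initial_segment[OF s2])
  also have "(\<Sum>j<n. norm (dk n a j)^2) = 0" by (simp add: dk_def)
  finally have eq: "(\<Sum>j. norm (dk n a j)^2) = (\<Sum>m. norm (dk n a (m+n))^2)" by simp
  have g: "(\<lambda>m. (norm a ^ 2) ^ m) sums (1 / (1 - norm a ^ 2))"
    using geometric_sums[of "norm a ^ 2"] assms by (simp add: abs_less_iff power_less_one_iff)
  have le: "(norm a ^ 2) ^ m \<le> norm (dk n a (m+n))^2" for m
  proof -
    have "1 \<le> fact n * real ((m+n) choose n)"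
    proof -
      have "1 \<le> (fact n :: real)" by simp
      moreover have "1 \<le> real ((m+n) choose n)"
      proof -
        have "0 < (m+n) choose n" by (rule zero_less_binomial) simp
        then have "1 \<le> (m+n) choose n" by linarith
        then show ?thesis by (metis of_nat_1 of_nat_le_iff)
      qed
      ultimately show ?thesis using mult_mono[of 1 "fact n" 1 "real ((m+n) choose n)"] by simp
    qed
    then have "norm a ^ m \<le> fact n * real ((m+n) choose n) * norm a ^ m"
      using mult_right_mono[of 1 _ "norm a ^ m"] by simp
    then have "(norm a ^ m)^2 \<le> (fact n * real ((m+n) choose n) * norm a ^ m)^2"
      by (intro power_mono) auto
    then show ?thesis by (simp add: dk_norm power_mult[symmetric] mult.commute)
  qed
  have "1 / (1 - norm a ^ 2) \<le> (\<Sum>m. norm (dk n a (m+n))^2)"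
    using sums_le[OF le g summable_sums] s2 summable_iff_shift[of "\<lambda>j. norm (dk n a j)^2" n] by simp
  then show ?thesis by (simp add: eq)
qed

lemma dk_bound:
  assumes "norm a < 1" "j < M"
  shows "norm (dk n a j) \<le> fact M * 2^M"
proof (cases "j < n")
  case True then show ?thesis by (simp add: dk_norm)
next
  case False
  have "fact n \<le> (fact M :: real)" using False assms by (intro fact_mono) auto
  moreover have "real (j choose n) \<le> 2^M"
  proof -
    have "j choose n \<le> 2^j" by (rule binomial_le_pow2)
    also have "(2::nat)^j \<le> 2^M" using assms by (intro power_increasing) auto
    finally show ?thesis by (metis of_nat_le_iff of_nat_numeral of_nat_power)
  qed
  moreover have "norm a ^ (j - n) \<le> 1" using assms by (intro power_le_one) auto
  ultimately have "fact n * real (j choose n) * norm a ^ (j - n) \<le> fact M * 2^M * 1"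
    by (intro mult_mono) auto
  then show ?thesis using False by (simp add: dk_norm)
qed

lemma szego_norm:
  assumes "norm a < 1"
  shows "h2_norm (szego_k n a) = sqrt (\<Sum>j. norm (dk n a j)^2)"
proof -
  have ks: "(\<lambda>j. dk n a j * z^j) sums szego_k n a z" if "norm z < 1" for z
  proof (rule szego_sums)
    have "norm (cnj a * z) = norm a * norm z" by (simp add: norm_mult)
    also have "\<dots> < 1" using assms that by (simp add: mult_le_one mult_less_le_imp_less mult_strict_mono' dual_order.strict_trans2 mult_left_le_one_le)
    finally show "norm (cnj a * z) < 1" .
  qed
  have eqn: "dk n a j * cnj (dk n a j) = of_real (norm (dk n a j)^2)" for j
    by (simp only: complex_norm_square)
  have s: "summable (\<lambda>j. norm (dk n a j * cnj (dk n a j)))"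
  proof -
    have "norm (dk n a j * cnj (dk n a j)) = norm (dk n a j)^2" for j
      by (simp add: norm_mult power2_eq_square)
    then show ?thesis using dk_summable2[OF assms] by simp
  qed
  have "h2_inner (szego_k n a) (szego_k n a) = (\<Sum>j. dk n a j * cnj (dk n a j))"
    by (rule h2_inner_eq[OF ks ks s])
  also have "\<dots> = of_real (\<Sum>j. norm (dk n a j)^2)"
    by (simp only: eqn suminf_of_real[OF dk_summable2[OF assms]])
  finally show ?thesis by (simp add: h2_norm_def)
qed


lemma amgm:
  fixes x y \<delta> :: real
  assumes "\<delta> > 0"
  shows "x * y \<le> (x^2/\<delta> + \<delta> * y^2) / 2"
proof -
  have "0 \<le> (x - \<delta> * y)^2" by simp
  then have "2 * \<delta> * (x * y) \<le> x^2 + \<delta>^2 * y^2" by (simp add: power2_eq_square algebra_simps)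
  then show ?thesis using assms by (simp add: field_simps power2_eq_square)
qed

lemma key:
  fixes c :: "nat \<Rightarrow> complex"
  assumes cf: "\<And>z. norm z < 1 \<Longrightarrow> (\<lambda>j. c j * z^j) sums f z"
    and S: "summable (\<lambda>j. norm (c j)^2)"
    and a: "norm a < 1"
    and \<delta>: "\<delta> > 0"
    and T: "(\<Sum>i. norm (c (i+M))^2) < \<delta>^2"
    and H: "(\<Sum>j<M. norm (c j) * norm (dk n a j)) < \<delta> * sqrt (\<Sum>j. norm (dk n a j)^2)"
  shows "norm (h2_inner f (szego_e n a)) < 2 * \<delta>"
proof -
  define D where "D = (\<Sum>j. norm (dk n a j)^2)"
  have a2: "norm a ^ 2 < 1" using a by (simp add: power_less_one_iff abs_less_iff)
  have "0 < 1 / (1 - norm a ^ 2)" using a2 by simp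
  also have "\<dots> \<le> D" unfolding D_def by (rule dk_lower[OF a])
  finally have D0: "D > 0" .
  define s where "s = sqrt D"
  have s0: "s > 0" using D0 by (simp add: s_def)
  have s2: "s^2 = D" using D0 by (simp add: s_def)
  define e where "e j = dk n a j / of_real s" for j
  have es: "(\<lambda>j. e j * z^j) sums szego_e n a z" if "norm z < 1" for z
  proof -
    have "norm (cnj a * z) = norm a * norm z" by (simp add: norm_mult)
    also have "\<dots> < 1" using a that by (simp add: mult_le_one mult_less_le_imp_less mult_strict_mono' dual_order.strict_trans2 mult_left_le_one_le)
    finally have "(\<lambda>j. dk n a j * z^j) sums szego_k n a z" by (rule szego_sums)
    then have "(\<lambda>j. dk n a j * z^j / of_real s) sums (szego_k n a z / of_real s)"
      by (rule sums_divide)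
    moreover have "szego_e n a z = szego_k n a z / of_real s"
      by (simp add: szego_e_def szego_norm[OF a] s_def D_def)
    ultimately show ?thesis by (simp add: e_def)
  qed
  have ne: "norm (e j) = norm (dk n a j) / s" for j using s0 by (simp add: e_def norm_divide)
  have ne2: "norm (e j)^2 = norm (dk n a j)^2 / D" for j by (simp add: ne power_divide s2)
  have E2s: "(\<lambda>j. norm (e j)^2) sums 1"
  proof -
    have "(\<lambda>j. norm (dk n a j)^2 / D) sums (D / D)"
      unfolding D_def by (rule sums_divide[OF summable_sums[OF dk_summable2[OF a]]])
    then show ?thesis using D0 by (simp add: ne2)
  qed
  define p where "p j = norm (c j) * norm (e j)" for j
  have pb: "p j \<le> (norm (c j)^2/\<delta> + \<delta> * norm (e j)^2) / 2" for j
    unfolding p_def by (rule amgm[OF \<delta>])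
  have Rs: "summable (\<lambda>j. (norm (c j)^2/\<delta> + \<delta> * norm (e j)^2) / 2)"
    using S E2s by (intro summable_divide summable_add summable_mult sums_summable) auto
  have ps: "summable p"
  proof (rule summable_comparison_test'[OF Rs, of 0])
    fix j :: nat
    have "norm (p j) = p j" by (simp add: p_def)
    then show "norm (p j) \<le> (norm (c j)^2/\<delta> + \<delta> * norm (e j)^2) / 2" using pb[of j] by simp
  qed
  have nce: "norm (c j * cnj (e j)) = p j" for j by (simp add: p_def norm_mult)
  have sp: "summable (\<lambda>j. norm (c j * cnj (e j)))"
    unfolding nce by (rule ps)
  have "h2_inner f (szego_e n a) = (\<Sum>j. c j * cnj (e j))"
    by (rule h2_inner_eq[OF cf es sp])
  then have "norm (h2_inner f (szego_e n a)) \<le> (\<Sum>j. p j)"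
    using summable_norm[of "\<lambda>j. c j * cnj (e j)"] ps nce by simp
  also have "(\<Sum>j. p j) = (\<Sum>i. p (i+M)) + (\<Sum>j<M. p j)"
    by (rule suminf_split_initial_segment[OF ps])
  also have "(\<Sum>j<M. p j) < \<delta>"
  proof -
    have "(\<Sum>j<M. p j) = (\<Sum>j<M. norm (c j) * norm (dk n a j)) / s"
      by (simp add: p_def ne sum_divide_distrib)
    also have "\<dots> < \<delta>" using H s0 by (simp add: divide_less_eq s_def D_def mult.commute)
    finally show ?thesis .
  qed
  also have "(\<Sum>i. p (i+M)) < \<delta>"
  proof -
    define TT where "TT = (\<Sum>i. norm (c (i+M))^2)"
    define EM where "EM = (\<Sum>i. norm (e (i+M))^2)"
    have ST: "summable (\<lambda>i. norm (c (i+M))^2)" using S summable_iff_shift[of "\<lambda>j. norm (c j)^2" M] by simp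
    have SE: "summable (\<lambda>i. norm (e (i+M))^2)"
      using sums_summable[OF E2s] summable_iff_shift[of "\<lambda>j. norm (e j)^2" M] by simp
    have EM1: "EM \<le> 1"
    proof -
      have "1 = (\<Sum>j. norm (e j)^2)" using E2s sums_unique by blast
      also have "\<dots> = EM + (\<Sum>j<M. norm (e j)^2)"
        unfolding EM_def by (rule suminf_split_initial_segment[OF sums_summable[OF E2s]])
      finally show ?thesis by (smt (verit) sum_nonneg zero_le_power2)
    qed
    have "(\<lambda>i. (norm (c (i+M))^2/\<delta> + \<delta> * norm (e (i+M))^2) / 2) sums ((TT/\<delta> + \<delta> * EM)/2)"
      unfolding TT_def EM_def
      by (intro sums_divide sums_add sums_mult summable_sums ST SE)
    then have "(\<Sum>i. p (i+M)) \<le> (TT/\<delta> + \<delta> * EM)/2"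
      using sums_le[OF _ summable_sums] pb ps summable_iff_shift[of p M] by (metis (no_types, lifting))
    also have "\<dots> < \<delta>"
    proof -
      have "TT / \<delta> < \<delta>" using T \<delta> by (simp add: TT_def divide_less_eq power2_eq_square)
      moreover have "\<delta> * EM \<le> \<delta>" using EM1 \<delta> by simp
      ultimately show ?thesis by simp
    qed
    finally show ?thesis .
  qed
  finally show ?thesis by simp
qed


lemma head_bound:
  fixes c :: "nat \<Rightarrow> complex" and \<delta> A r :: real
  assumes a: "norm a < 1" and \<delta>: "\<delta> > 0"
    and A: "A = fact M * 2^M * (\<Sum>j<M. norm (c j))"
    and r: "r = 1 - \<delta>^2 / (2 * (A^2 + 1))"
    and cond: "r < norm a \<or> M < n"
  shows "(\<Sum>j<M. norm (c j) * norm (dk n a j)) < \<delta> * sqrt (\<Sum>j. norm (dk n a j)^2)"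
proof -
  define D where "D = (\<Sum>j. norm (dk n a j)^2)"
  have a2: "norm a ^ 2 < 1" using a by (simp add: power_less_one_iff abs_less_iff)
  have DL: "1 / (1 - norm a ^ 2) \<le> D" unfolding D_def by (rule dk_lower[OF a])
  have "0 < 1 / (1 - norm a ^ 2)" using a2 by simp
  then have D0: "D > 0" using DL by linarith
  have sD: "sqrt D > 0" using D0 by simp
  show ?thesis
  proof (cases "M \<le> n")
    case True
    then have "(\<Sum>j<M. norm (c j) * norm (dk n a j)) = 0" by (simp add: dk_def)
    then show ?thesis using sD \<delta> by (simp add: D_def)
  next
    case False
    then have ra: "r < norm a" using cond by auto
    have A0: "A \<ge> 0" unfolding A by (intro mult_nonneg_nonneg sum_nonneg) auto
    have le: "(\<Sum>j<M. norm (c j) * norm (dk n a j)) \<le> A"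
    proof -
      have "(\<Sum>j<M. norm (c j) * norm (dk n a j)) \<le> (\<Sum>j<M. norm (c j) * (fact M * 2^M))"
        by (intro sum_mono mult_left_mono dk_bound[OF a]) auto
      also have "\<dots> = A" unfolding A by (simp add: sum_distrib_left sum_distrib_right mult_ac)
      finally show ?thesis .
    qed
    have "1 - norm a ^ 2 \<le> 2 * (1 - norm a)"
    proof -
      have "0 \<le> (1 - norm a)^2" by simp
      then show ?thesis by (simp add: power2_eq_square algebra_simps)
    qed
    also have "\<dots> < 2 * (1 - r)" using ra by simp
    also have "\<dots> = \<delta>^2 / (A^2 + 1)"
    proof -
      have "0 < A^2 + 1" by (simp add: add_nonneg_pos)
      then show ?thesis by (simp add: r field_simps)
    qed
    finally have x: "1 - norm a ^ 2 < \<delta>^2 / (A^2 + 1)" .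
    have "A^2 * (1 - norm a ^ 2) \<le> A^2 * (\<delta>^2 / (A^2 + 1))"
      using x by (intro mult_left_mono) auto
    also have "\<dots> < \<delta>^2"
    proof -
      have "0 < A^2 + 1" by (simp add: add_nonneg_pos)
      then have "A^2 / (A^2 + 1) < 1" by (simp add: divide_less_eq)
      then have "A^2 / (A^2 + 1) * \<delta>^2 < 1 * \<delta>^2" using \<delta> by (intro mult_strict_right_mono) auto
      then show ?thesis by simp
    qed
    finally have "A^2 * (1 - norm a ^ 2) < \<delta>^2" .
    then have "A^2 < \<delta>^2 * (1 / (1 - norm a ^ 2))"
    proof -
      assume h: "A^2 * (1 - norm a ^ 2) < \<delta>^2"
      have q0: "0 < 1 - norm a ^ 2" using a2 by simp
      have "A^2 < \<delta>^2 / (1 - norm a ^ 2)" using h by (simp only: pos_less_divide_eq[OF q0])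
      then show ?thesis by simp
    qed
    also have "\<dots> \<le> \<delta>^2 * D" using DL by (intro mult_left_mono) auto
    also have "\<dots> = (\<delta> * sqrt D)^2" using D0 by (simp add: power_mult_distrib)
    finally have "A^2 < (\<delta> * sqrt D)^2" .
    moreover have "0 \<le> \<delta> * sqrt D" using \<delta> sD by simp
    ultimately have "A < \<delta> * sqrt D" by (rule power_less_imp_less_base)
    then show ?thesis using le by (simp add: D_def)
  qed
qed

theorem theorem5:
  fixes f :: "complex \<Rightarrow> complex"
  assumes "f \<in> H2"
  shows "\<forall>\<epsilon>>0. \<exists>r<1. \<exists>N::nat. \<forall>n::nat. \<forall>a::complex.
           norm a < 1 \<longrightarrow> (norm a > r \<or> n > N) \<longrightarrow>
           norm (h2_inner f (szego_e n a)) < \<epsilon>"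
proof (intro allI impI)
  fix \<epsilon> :: real assume \<epsilon>: "\<epsilon> > 0"
  have holf: "f holomorphic_on ball 0 1" and bnd: "bounded ((\<lambda>r. circle_mean f f r) ` {0..<1})"
    using assms by (auto simp: H2_def)
  define c where "c j = (deriv ^^ j) f 0 / fact j" for j
  have cf: "(\<lambda>j. c j * z^j) sums f z" if "norm z < 1" for z
    using holomorphic_power_series[OF holf, of z] that by (simp add: c_def)
  have S: "summable (\<lambda>j. norm (c j)^2)" by (rule H2_summable[OF cf bnd])
  define \<delta> where "\<delta> = \<epsilon> / 2"
  have \<delta>: "\<delta> > 0" using \<epsilon> by (simp add: \<delta>_def)
  obtain M where M: "\<And>m. m \<ge> M \<Longrightarrow> norm (\<Sum>i. norm (c (i+m))^2) < \<delta>^2"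
    using suminf_exist_split[OF _ S, of "\<delta>^2"] \<delta> by auto
  have T: "(\<Sum>i. norm (c (i+M))^2) < \<delta>^2"
    using M[of M] by simp
  define A where "A = fact M * 2^M * (\<Sum>j<M. norm (c j))"
  define r where "r = 1 - \<delta>^2 / (2 * (A^2 + 1))"
  show "\<exists>r<1. \<exists>N::nat. \<forall>n::nat. \<forall>a::complex.
           norm a < 1 \<longrightarrow> (norm a > r \<or> n > N) \<longrightarrow>
           norm (h2_inner f (szego_e n a)) < \<epsilon>"
  proof (intro exI conjI allI impI)
    have "0 < 2 * (A^2 + 1)" by (simp add: add_nonneg_pos)
    then have "0 < \<delta>^2 / (2 * (A^2 + 1))" using \<delta> by (intro divide_pos_pos) auto
    then show "r < 1" by (simp add: r_def)
    fix n :: nat and a :: complex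
    assume a: "norm a < 1" and cond: "r < norm a \<or> M < n"
    have H: "(\<Sum>j<M. norm (c j) * norm (dk n a j)) < \<delta> * sqrt (\<Sum>j. norm (dk n a j)^2)"
      by (rule head_bound[OF a \<delta> A_def r_def cond])
    have "norm (h2_inner f (szego_e n a)) < 2 * \<delta>"
      by (rule key[OF cf S a \<delta> T H])
    then show "norm (h2_inner f (szego_e n a)) < \<epsilon>" by (simp add: \<delta>_def)
  qed
qed

end
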